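(* Let $G$ be a graph. Then for every induced subgraph $H$ of $G$, \[\chi(G) \leq \frac{1}{2} \left(\omega(G) + \frac{\Delta(G) + 1 + |G|}{2} \right) + \frac{3\chi(H) - |H|}{4}.\]
   Context: All graphs are finite and simple with non-empty vertex set; induced subgraphs are likewise taken with non-empty vertex set. $|G|$ denotes the number of vertices of $G$, $\chi(G)$ the chromatic number, $\omega(G)$ the clique number and $\Delta(G)$ the maximum degree. *)

theory Defs
  imports Complex_Main
begin

definition graph :: "'a set \<Rightarrow> 'a set set \<Rightarrow> bool" where
  "graph V E \<longleftrightarrow> finite V \<and> V \<noteq> {} \<and>
     (\<forall>e\<in>E. \<exists>u v. e = {u, v} \<and> u \<in> V \<and> v \<in> V \<and> u \<noteq> v)"

definition induced_edges :: "'a set set \<Rightarrow> 'a set \<Rightarrow> 'a set set" where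
  "induced_edges E S = {e \<in> E. e \<subseteq> S}"

definition colouring :: "'a set \<Rightarrow> 'a set set \<Rightarrow> nat \<Rightarrow> ('a \<Rightarrow> nat) \<Rightarrow> bool" where
  "colouring V E k f \<longleftrightarrow> (\<forall>v\<in>V. f v < k) \<and> (\<forall>u\<in>V. \<forall>v\<in>V. {u, v} \<in> E \<longrightarrow> f u \<noteq> f v)"

definition chromatic_number :: "'a set \<Rightarrow> 'a set set \<Rightarrow> nat" where
  "chromatic_number V E = (LEAST k. \<exists>f. colouring V E k f)"

definition clique :: "'a set \<Rightarrow> 'a set set \<Rightarrow> 'a set \<Rightarrow> bool" where
  "clique V E K \<longleftrightarrow> K \<subseteq> V \<and> (\<forall>u\<in>K. \<forall>v\<in>K. u \<noteq> v \<longrightarrow> {u, v} \<in> E)"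

definition clique_number :: "'a set \<Rightarrow> 'a set set \<Rightarrow> nat" where
  "clique_number V E = Max {card K | K. clique V E K}"

definition degree :: "'a set \<Rightarrow> 'a set set \<Rightarrow> 'a \<Rightarrow> nat" where
  "degree V E v = card {u \<in> V. {u, v} \<in> E}"

definition max_degree :: "'a set \<Rightarrow> 'a set set \<Rightarrow> nat" where
  "max_degree V E = Max (degree V E ` V)"

end

theory Submission
  imports Defs
begin

locale gr =
  fixes E :: "'a set set"
  assumes loopfree: "{u} \<notin> E"
begin

definition indep :: "'a set \<Rightarrow> bool" where
  "indep J \<longleftrightarrow> (\<forall>a\<in>J. \<forall>b\<in>J. {a,b} \<notin> E)"

lemma chi_col: assumes "finite W" shows "\<exists>f. colouring W E (chromatic_number W E) f"
proof -
  obtain h where h: "bij_betw h W {0..<card W}" using ex_bij_betw_finite_nat[OF assms] by blast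
  have "colouring W E (card W) h"
    unfolding colouring_def
  proof (intro conjI ballI impI)
    fix v assume "v \<in> W" thus "h v < card W" using h by (auto simp: bij_betw_def)
  next
    fix u v assume "u \<in> W" "v \<in> W" "{u,v} \<in> E"
    then have "u \<noteq> v" using loopfree by auto
    thus "h u \<noteq> h v" using h \<open>u \<in> W\<close> \<open>v \<in> W\<close> by (auto simp: bij_betw_def inj_on_def)
  qed
  hence "\<exists>k f. colouring W E k f" by blast
  thus ?thesis unfolding chromatic_number_def by (rule LeastI_ex)
qed

lemma chi_le: "colouring W E k f \<Longrightarrow> chromatic_number W E \<le> k"
  unfolding chromatic_number_def by (metis (mono_tags) Least_le)

lemma chi_mono: assumes "finite W" "W' \<subseteq> W" shows "chromatic_number W' E \<le> chromatic_number W E"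
proof -
  obtain f where "colouring W E (chromatic_number W E) f" using chi_col[OF assms(1)] by blast
  hence "colouring W' E (chromatic_number W E) f" using assms(2) unfolding colouring_def by blast
  thus ?thesis by (rule chi_le)
qed

lemma chi_pos: assumes "finite W" "W \<noteq> {}" shows "1 \<le> chromatic_number W E"
proof -
  obtain f where "colouring W E (chromatic_number W E) f" using chi_col[OF assms(1)] by blast
  moreover obtain v where "v \<in> W" using assms by blast
  ultimately show ?thesis unfolding colouring_def by fastforce
qed

lemma chi_empty: "chromatic_number {} E = 0"
proof -
  have "colouring {} E 0 (\<lambda>_. 0)" unfolding colouring_def by simp
  thus ?thesis using chi_le by fastforce
qed

lemma chi_indep: assumes "indep J" shows "chromatic_number J E \<le> 1"
proof -
  have "colouring J E 1 (\<lambda>_. 0)" using assms unfolding colouring_def indep_def by simp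
  thus ?thesis by (rule chi_le)
qed

lemma chi_add_indep: assumes "finite W" "indep J"
  shows "chromatic_number W E \<le> chromatic_number (W - J) E + 1"
proof -
  let ?k = "chromatic_number (W - J) E"
  obtain f where f: "colouring (W - J) E ?k f" using chi_col[of "W - J"] assms(1) by blast
  define g where "g v = (if v \<in> J then ?k else f v)" for v
  have "colouring W E (?k + 1) g"
    using f assms(2) unfolding colouring_def indep_def g_def
    by (smt (verit, ccfv_threshold) DiffI less_Suc_eq less_irrefl_nat Suc_eq_plus1)
  thus ?thesis by (rule chi_le)
qed

lemma chi_remove_class:
  assumes f: "colouring S E k f" and s0: "s0 \<in> S"
  shows "chromatic_number (S - {v\<in>S. f v = f s0}) E \<le> k - 1"
proof -
  define g where "g v = (if f v > f s0 then f v - 1 else f v)" for v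
  have "colouring (S - {v\<in>S. f v = f s0}) E (k - 1) g"
    unfolding colouring_def
  proof (intro conjI ballI impI)
    fix v assume v: "v \<in> S - {v\<in>S. f v = f s0}"
    have "f v < k" "f s0 < k" using f v s0 unfolding colouring_def by auto
    thus "g v < k - 1" using v unfolding g_def by auto
  next
    fix u v assume u: "u \<in> S - {v\<in>S. f v = f s0}" and v: "v \<in> S - {v\<in>S. f v = f s0}" and "{u,v} \<in> E"
    hence "f u \<noteq> f v" using f unfolding colouring_def by auto
    thus "g u \<noteq> g v" using u v unfolding g_def by auto
  qed
  thus ?thesis by (rule chi_le)
qed

lemma unused_colour:
  assumes g: "colouring W E k g" and b: "b < k" and un: "\<forall>v\<in>W. g v \<noteq> b"
  shows "chromatic_number W E < k"
proof -
  define h where "h v = (if g v = k - 1 then b else g v)" for v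
  have "colouring W E (k - 1) h"
    unfolding colouring_def
  proof (intro conjI ballI impI)
    fix v assume v: "v \<in> W"
    have "g v < k" using g v unfolding colouring_def by auto
    thus "h v < k - 1" using un v b unfolding h_def by auto
  next
    fix u v assume u: "u \<in> W" and v: "v \<in> W" and "{u,v} \<in> E"
    hence "g u \<noteq> g v" using g unfolding colouring_def by auto
    thus "h u \<noteq> h v" using u v un unfolding h_def by auto
  qed
  hence "chromatic_number W E \<le> k - 1" by (rule chi_le)
  thus ?thesis using b by linarith
qed

lemma om_ge: assumes "finite W" "clique W E K" shows "card K \<le> clique_number W E"
proof -
  have "{card K | K. clique W E K} \<subseteq> card ` Pow W" unfolding clique_def by auto
  hence "finite {card K | K. clique W E K}" using assms(1) by (meson finite_Pow_iff finite_imageI finite_subset)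
  thus ?thesis unfolding clique_number_def using assms(2) by (intro Max_ge) auto
qed

lemma om_mono: assumes "finite W" "W' \<subseteq> W" shows "clique_number W' E \<le> clique_number W E"
proof -
  have "finite W'" using assms finite_subset by blast
  have "{card K | K. clique W' E K} \<subseteq> card ` Pow W'" unfolding clique_def by auto
  hence fin: "finite {card K | K. clique W' E K}" using \<open>finite W'\<close> by (meson finite_Pow_iff finite_imageI finite_subset)
  have "clique W' E {}" unfolding clique_def by auto
  hence "{card K | K. clique W' E K} \<noteq> {}" by blast
  then obtain K where "clique W' E K" "card K = clique_number W' E"
    using Max_in[OF fin] unfolding clique_number_def by auto
  moreover have "clique W E K" using \<open>clique W' E K\<close> assms(2) unfolding clique_def by auto
  ultimately show ?thesis using om_ge[OF assms(1)] by metis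
qed

lemma om_pos: assumes "finite W" "W \<noteq> {}" shows "1 \<le> clique_number W E"
proof -
  obtain v where "v \<in> W" using assms by blast
  hence "clique W E {v}" unfolding clique_def by auto
  thus ?thesis using om_ge[OF assms(1)] by fastforce
qed

lemma dg_le: assumes "finite W" "v \<in> W" shows "degree W E v \<le> max_degree W E"
  unfolding max_degree_def using assms by auto

lemma md_attained: assumes "finite W" "W \<noteq> {}" shows "\<exists>v\<in>W. degree W E v = max_degree W E"
proof -
  have "Max (degree W E ` W) \<in> degree W E ` W" using Max_in[of "degree W E ` W"] assms by auto
  thus ?thesis unfolding max_degree_def by auto
qed

lemma md_mono: assumes "finite W" "W' \<subseteq> W" "W' \<noteq> {}" shows "max_degree W' E \<le> max_degree W E"
proof -
  have "finite W'" using assms finite_subset by blast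
  obtain v where v: "v \<in> W'" "degree W' E v = max_degree W' E" using md_attained[OF \<open>finite W'\<close> assms(3)] by blast
  have "degree W' E v \<le> degree W E v" unfolding degree_def
    using assms by (intro card_mono) auto
  thus ?thesis using v dg_le[OF assms(1), of v] assms(2) by auto
qed

lemma peel: assumes "finite W" "J \<subseteq> W" "\<forall>v\<in>W - J. \<exists>j\<in>J. {v,j} \<in> E" "W - J \<noteq> {}"
  shows "max_degree (W - J) E + 1 \<le> max_degree W E"
proof -
  obtain v where v: "v \<in> W - J" "degree (W - J) E v = max_degree (W - J) E"
    using md_attained[of "W - J"] assms by auto
  obtain j where j: "j \<in> J" "{v,j} \<in> E" using assms(3) v by blast
  have "{u \<in> W - J. {u,v} \<in> E} \<subset> {u \<in> W. {u,v} \<in> E}"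
    using j assms(2) by (auto simp: insert_commute)
  hence "degree (W - J) E v < degree W E v" unfolding degree_def
    using assms(1) by (intro psubset_card_mono) auto
  thus ?thesis using v dg_le[OF assms(1), of v] by auto
qed

lemma max_indep_ext:
  assumes "finite W" "C \<subseteq> W" "indep C"
  shows "\<exists>J. C \<subseteq> J \<and> J \<subseteq> W \<and> indep J \<and> (\<forall>v\<in>W - J. \<exists>j\<in>J. {v,j} \<in> E)"
  using assms
proof (induction "card (W - C)" arbitrary: C rule: less_induct)
  case less
  show ?case
  proof (cases "\<forall>v\<in>W - C. \<exists>j\<in>C. {v,j} \<in> E")
    case True thus ?thesis using less.prems by blast
  next
    case False
    then obtain v where v: "v \<in> W - C" "\<forall>j\<in>C. {v,j} \<notin> E" by blast
    have "indep (insert v C)" using less.prems(3) v loopfree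
      unfolding indep_def by (auto simp: insert_commute)
    moreover have "card (W - insert v C) < card (W - C)"
      using v less.prems(1) by (intro psubset_card_mono) auto
    ultimately obtain J where "insert v C \<subseteq> J \<and> J \<subseteq> W \<and> indep J \<and> (\<forall>v\<in>W - J. \<exists>j\<in>J. {v,j} \<in> E)"
      using less.hyps[of "insert v C"] less.prems v by blast
    thus ?thesis by blast
  qed
qed



lemma recol_colouring:
  assumes fp: "\<And>u v. u\<in>W \<Longrightarrow> v\<in>W \<Longrightarrow> {u,v}\<in>E \<Longrightarrow> f u \<noteq> f v"
    and gk: "\<And>w. w \<in> W \<Longrightarrow> g w < k"
    and same: "\<And>w. w \<in> W \<Longrightarrow> w \<notin> M \<Longrightarrow> g w = f w"
    and moved: "\<And>m w. m \<in> M \<Longrightarrow> m \<in> W \<Longrightarrow> w \<in> W \<Longrightarrow> w \<noteq> m \<Longrightarrow> g w = g m \<Longrightarrow> {w, m} \<notin> E"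
  shows "colouring W E k g"
  unfolding colouring_def
proof (intro conjI ballI impI)
  fix v assume "v \<in> W" thus "g v < k" by (rule gk)
next
  fix u v assume uv: "u \<in> W" "v \<in> W" "{u,v} \<in> E"
  hence ne: "u \<noteq> v" using loopfree by auto
  have c: "{v,u} = {u,v}" by (rule insert_commute)
  show "g u \<noteq> g v"
  proof
    assume eq: "g u = g v"
    show False
    proof (cases "u \<in> M")
      case True thus False using moved[of u v] uv ne eq c by auto
    next
      case False
      show False
      proof (cases "v \<in> M")
        case True thus False using moved[of v u] uv ne eq by auto
      next
        case False
        hence "f u = f v" using same[of u] same[of v] \<open>u \<notin> M\<close> uv eq by auto
        thus False using fp[OF uv] by blast
      qed
    qed
  qed
qed

lemma lemB:
  assumes fin: "finite W" and ne: "W \<noteq> {}"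
    and no3: "\<And>a b c. a\<in>W \<Longrightarrow> b\<in>W \<Longrightarrow> c\<in>W \<Longrightarrow> a\<noteq>b \<Longrightarrow> a\<noteq>c \<Longrightarrow> b\<noteq>c
       \<Longrightarrow> {a,b}\<notin>E \<Longrightarrow> {a,c}\<notin>E \<Longrightarrow> {b,c}\<notin>E \<Longrightarrow> False"
  shows "4 * chromatic_number W E \<le> 2 * clique_number W E + max_degree W E + 1 + card W"
proof -
  define k where "k = chromatic_number W E"
  obtain f where f: "colouring W E k f" using chi_col[OF fin] k_def by blast
  have fk: "\<And>v. v\<in>W \<Longrightarrow> f v < k" using f unfolding colouring_def by auto
  have fp: "\<And>u v. u\<in>W \<Longrightarrow> v\<in>W \<Longrightarrow> {u,v}\<in>E \<Longrightarrow> f u \<noteq> f v" using f unfolding colouring_def by auto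
  have nocol: "\<And>g b. colouring W E k g \<Longrightarrow> b < k \<Longrightarrow> \<forall>v\<in>W. g v \<noteq> b \<Longrightarrow> False"
    using unused_colour k_def by fastforce
  have used: "\<And>c. c < k \<Longrightarrow> \<exists>v\<in>W. f v = c" using nocol f by blast
  have same3: "\<And>a b c. a\<in>W \<Longrightarrow> b\<in>W \<Longrightarrow> c\<in>W \<Longrightarrow> a\<noteq>b \<Longrightarrow> a\<noteq>c \<Longrightarrow> b\<noteq>c
       \<Longrightarrow> f a = f b \<Longrightarrow> f a = f c \<Longrightarrow> False"
  proof -
    fix a b c assume *: "a\<in>W" "b\<in>W" "c\<in>W" "a\<noteq>b" "a\<noteq>c" "b\<noteq>c" "f a = f b" "f a = f c"
    hence "{a,b}\<notin>E" "{a,c}\<notin>E" "{b,c}\<notin>E" using fp by metis+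
    thus False using no3 * by blast
  qed
  define U where "U = {x\<in>W. \<forall>v\<in>W. f v = f x \<longrightarrow> v = x}"
  define P where "P = W - U"
  have partner: "\<And>v. v \<in> P \<Longrightarrow> \<exists>w\<in>P. w \<noteq> v \<and> f w = f v"
  proof -
    fix v assume v: "v \<in> P"
    then obtain w where w: "w \<in> W" "f w = f v" "w \<noteq> v" unfolding P_def U_def by auto
    hence "w \<notin> U" using v unfolding U_def P_def by auto
    thus "\<exists>w\<in>P. w \<noteq> v \<and> f w = f v" using w unfolding P_def by auto
  qed
  have finP: "finite P" "finite U" using fin unfolding P_def U_def by auto
  have class2: "\<And>v. v\<in>P \<Longrightarrow> card {u\<in>P. f u = f v} = 2"
  proof -
    fix v assume v: "v \<in> P"
    then obtain w where w: "w\<in>P" "w \<noteq> v" "f w = f v" using partner by blast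
    have "{u\<in>P. f u = f v} = {v, w}"
    proof (intro equalityI subsetI)
      fix u assume u: "u \<in> {u\<in>P. f u = f v}"
      show "u \<in> {v,w}"
      proof (rule ccontr)
        assume "u \<notin> {v,w}"
        thus False using same3[of u v w] u v w unfolding P_def by auto
      qed
    qed (use v w in auto)
    thus "card {u\<in>P. f u = f v} = 2" using w by auto
  qed
  have cardP: "card P = 2 * card (f ` P)"
  proof -
    have "(\<Sum>i\<in>P. card {j\<in>f ` P. f i = j}) = 2 * card (f ` P)"
    proof (rule sum_multicount)
      show "\<forall>j\<in>f ` P. card {i \<in> P. f i = j} = 2" using class2 by blast
    qed (use finP in auto)
    moreover have "(\<Sum>i\<in>P. card {j\<in>f ` P. f i = j}) = (\<Sum>i\<in>P. 1)"
    proof (rule sum.cong)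
      fix i assume "i \<in> P" hence "{j\<in>f ` P. f i = j} = {f i}" by auto
      thus "card {j\<in>f ` P. f i = j} = 1" by simp
    qed simp
    ultimately show ?thesis by simp
  qed
  have injU: "inj_on f U" unfolding inj_on_def U_def by auto
  have disj: "f ` U \<inter> f ` P = {}"
  proof (rule ccontr)
    assume "f ` U \<inter> f ` P \<noteq> {}"
    then obtain u q where "u \<in> U" "q \<in> P" "f u = f q" by auto
    thus False unfolding U_def P_def by auto
  qed
  have fW: "f ` W = {0..<k}"
  proof (intro equalityI subsetI)
    fix c assume "c \<in> {0..<k}" thus "c \<in> f ` W" using used by force
  qed (use fk in auto)
  have WUP: "W = U \<union> P" "U \<inter> P = {}" unfolding P_def U_def by auto
  have "k = card (f ` U \<union> f ` P)" using fW WUP by (metis card_atLeastLessThan image_Un minus_nat.diff_0)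
  also have "\<dots> = card U + card (f ` P)" using disj finP injU by (simp add: card_Un_disjoint card_image)
  finally have kk: "k = card U + card (f ` P)" .
  have cW: "card W = card U + card P" using WUP finP by (simp add: card_Un_disjoint)
  have key: "2 * k = card U + card W" using kk cW cardP by simp
  have dec: "\<And>v. v \<in> W \<Longrightarrow> card W \<le> 1 + degree W E v + card {u\<in>W. u \<noteq> v \<and> {u,v} \<notin> E}"
  proof -
    fix v assume v: "v \<in> W"
    define A where "A = {u\<in>W. {u,v}\<in>E}"
    define B where "B = {u\<in>W. u \<noteq> v \<and> {u,v} \<notin> E}"
    have fA: "finite A" "finite B" using fin unfolding A_def B_def by auto
    have "W \<subseteq> insert v (A \<union> B)" unfolding A_def B_def by blast
    hence "card W \<le> card (insert v (A \<union> B))" using fA by (intro card_mono) auto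
    also have "\<dots> \<le> Suc (card (A \<union> B))" using fA by (simp add: card_insert_if)
    also have "\<dots> \<le> Suc (card A + card B)" using card_Un_le[of A B] by simp
    finally show "card W \<le> 1 + degree W E v + card {u\<in>W. u \<noteq> v \<and> {u,v} \<notin> E}"
      unfolding degree_def A_def B_def by simp
  qed
  have nnclq: "\<And>v. v \<in> W \<Longrightarrow> clique W E {u\<in>W. u \<noteq> v \<and> {u,v} \<notin> E}"
  proof -
    fix v assume v: "v \<in> W"
    show "clique W E {u\<in>W. u \<noteq> v \<and> {u,v} \<notin> E}" unfolding clique_def
    proof (intro conjI ballI impI)
      fix a b assume a: "a \<in> {u\<in>W. u \<noteq> v \<and> {u,v} \<notin> E}" and b: "b \<in> {u\<in>W. u \<noteq> v \<and> {u,v} \<notin> E}" and "a \<noteq> b"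
      show "{a,b} \<in> E"
      proof (rule ccontr)
        assume "{a,b} \<notin> E" thus False using no3[of a b v] a b v \<open>a \<noteq> b\<close> by blast
      qed
    qed auto
  qed
  show ?thesis
  proof (cases "U = {}")
    case True
    then obtain v where v: "v \<in> W" using ne by blast
    have "card W \<le> 1 + max_degree W E + clique_number W E"
      using dec[OF v] dg_le[OF fin v] om_ge[OF fin nnclq[OF v]] by linarith
    thus ?thesis using key True k_def by simp
  next
    case False
    then obtain x where xU: "x \<in> U" by blast
    hence xW: "x \<in> W" unfolding U_def by auto
    define Y where "Y = {u\<in>W. u \<noteq> x \<and> {u,x} \<notin> E}"
    have cY: "card W \<le> 1 + max_degree W E + card Y"
      using dec[OF xW] dg_le[OF fin xW] unfolding Y_def by linarith
    have Uf: "\<And>z v. z \<in> U \<Longrightarrow> v \<in> W \<Longrightarrow> f v = f z \<Longrightarrow> v = z" unfolding U_def by auto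
    have UW: "U \<subseteq> W" unfolding U_def by auto
    have Uclq: "\<And>x1 x2. x1\<in>U \<Longrightarrow> x2\<in>U \<Longrightarrow> x1\<noteq>x2 \<Longrightarrow> {x1,x2}\<in>E"
    proof (rule ccontr)
      fix x1 x2 assume a: "x1\<in>U" "x2\<in>U" "x1\<noteq>x2" "{x1,x2}\<notin>E"
      define g where "g = f(x2 := f x1)"
      have "colouring W E k g" unfolding colouring_def
      proof (intro conjI ballI impI)
        fix v assume "v \<in> W" thus "g v < k" using fk a UW unfolding g_def by auto
      next
        fix u v assume uv: "u \<in> W" "v \<in> W" "{u,v} \<in> E"
        hence "u \<noteq> v" using loopfree by auto
        show "g u \<noteq> g v"
        proof
          assume eq: "g u = g v"
          show False
          proof (cases "u = x2")
            case True
            hence "v \<noteq> x2" using \<open>u \<noteq> v\<close> by auto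
            hence "f v = f x1" using eq True unfolding g_def by auto
            hence "v = x1" using Uf[of x1 v] a uv by auto
            thus False using uv True a by (auto simp: insert_commute)
          next
            case False
            show False
            proof (cases "v = x2")
              case True
              hence "f u = f x1" using eq False unfolding g_def by auto
              hence "u = x1" using Uf[of x1 u] a uv by auto
              thus False using uv True a by (auto simp: insert_commute)
            next
              case False
              thus False using eq \<open>u \<noteq> x2\<close> fp[OF uv] unfolding g_def by auto
            qed
          qed
        qed
      qed
      moreover have "\<forall>v\<in>W. g v \<noteq> f x2"
      proof
        fix v assume v: "v \<in> W"
        have x2W: "x2 \<in> W" using a UW by auto
        show "g v \<noteq> f x2"
        proof (cases "v = x2")
          case True thus ?thesis using Uf[of x1 x2] a x2W unfolding g_def by force
        next
          case False thus ?thesis using Uf[of x2 v] a v unfolding g_def by force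
        qed
      qed
      ultimately show False using nocol fk a UW by blast
    qed
    have fxU: "\<And>z. z \<in> U \<Longrightarrow> z \<noteq> x \<Longrightarrow> f z \<noteq> f x" using Uf xW by metis
    have YW: "Y \<subseteq> W" unfolding Y_def by auto
    have com: "\<And>a b. {a,b} = {b,a}" by (rule insert_commute)
    have Ynx: "\<And>y. y \<in> Y \<Longrightarrow> {y,x} \<notin> E \<and> {x,y} \<notin> E \<and> y \<noteq> x"
    proof -
      fix y assume "y \<in> Y"
      hence "{y,x} \<notin> E" "y \<noteq> x" unfolding Y_def by auto
      thus "{y,x} \<notin> E \<and> {x,y} \<notin> E \<and> y \<noteq> x" using com[of x y] by simp
    qed
    have YP: "\<And>y. y \<in> Y \<Longrightarrow> y \<notin> U"
    proof
      fix y assume "y \<in> Y" "y \<in> U" thus False using Uclq[of x y] xU Ynx by blast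
    qed
    have Yclq: "\<And>y1 y2. y1 \<in> Y \<Longrightarrow> y2 \<in> Y \<Longrightarrow> y1 \<noteq> y2 \<Longrightarrow> {y1,y2} \<in> E"
    proof (rule ccontr)
      fix y1 y2 assume "y1 \<in> Y" "y2 \<in> Y" "y1 \<noteq> y2" "{y1,y2} \<notin> E"
      thus False using no3[of x y1 y2] Ynx xW YW by blast
    qed
    have fyx: "\<And>y. y \<in> Y \<Longrightarrow> f y \<noteq> f x" using Uf[OF xU] Ynx YW by blast
    define p where "p y = (SOME w. w \<in> W \<and> w \<noteq> y \<and> f w = f y)" for y
    have pW: "\<And>y. y \<in> Y \<Longrightarrow> p y \<in> W \<and> p y \<noteq> y \<and> f (p y) = f y"
    proof -
      fix y assume y: "y \<in> Y"
      hence "\<exists>w. w \<in> W \<and> w \<noteq> y \<and> f w = f y" using YP[OF y] YW unfolding U_def by blast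
      thus "p y \<in> W \<and> p y \<noteq> y \<and> f (p y) = f y" unfolding p_def by (rule someI_ex)
    qed
    have puniq: "\<And>y w. y \<in> Y \<Longrightarrow> w \<in> W \<Longrightarrow> w \<noteq> y \<Longrightarrow> f w = f y \<Longrightarrow> w = p y"
    proof (rule ccontr)
      fix y w assume *: "y \<in> Y" "w \<in> W" "w \<noteq> y" "f w = f y" "w \<noteq> p y"
      have "p y \<in> W" "p y \<noteq> y" "f (p y) = f y" using pW[OF *(1)] by auto
      moreover have "y \<in> W" using *(1) YW by auto
      ultimately show False using same3[of y w "p y"] * by metis
    qed
    have pyE: "\<And>y. y \<in> Y \<Longrightarrow> {y, p y} \<notin> E \<and> {p y, y} \<notin> E"
      using pW fp YW by (metis subsetD)
    have pnx: "\<And>y. y \<in> Y \<Longrightarrow> p y \<noteq> x" using pW fyx by metis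
    have pnY: "\<And>y. y \<in> Y \<Longrightarrow> p y \<notin> Y"
    proof
      fix y assume y: "y \<in> Y" "p y \<in> Y"
      thus False using no3[of x y "p y"] Ynx[of y] Ynx[of "p y"] pW[of y] pyE[of y] xW YW by auto
    qed
    have pxE: "\<And>y. y \<in> Y \<Longrightarrow> {p y, x} \<in> E \<and> {x, p y} \<in> E"
    proof -
      fix y assume y: "y \<in> Y"
      hence "{p y, x} \<in> E" using pnY[OF y] pW[OF y] pnx[OF y] unfolding Y_def by blast
      thus "{p y, x} \<in> E \<and> {x, p y} \<in> E" using com[of x "p y"] by simp
    qed
    have pnU: "\<And>y. y \<in> Y \<Longrightarrow> p y \<notin> U"
    proof
      fix y assume y: "y \<in> Y" "p y \<in> U"
      thus False using Uf[of "p y" y] pW[of y] YW by auto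
    qed
    have pinj: "inj_on p Y"
    proof (rule inj_onI, rule ccontr)
      fix y1 y2 assume *: "y1 \<in> Y" "y2 \<in> Y" "p y1 = p y2" "y1 \<noteq> y2"
      hence "f y1 = f y2" using pW by metis
      hence "{y1,y2} \<notin> E" using fp * YW by blast
      thus False using Yclq * by blast
    qed
    have pU: "\<And>y z. y \<in> Y \<Longrightarrow> z \<in> U \<Longrightarrow> {p y, z} \<in> E"
    proof (rule ccontr)
      fix y z assume y: "y \<in> Y" and z: "z \<in> U" and ne: "{p y, z} \<notin> E"
      have zx: "z \<noteq> x" using ne pxE[OF y] by auto
      have yW: "y \<in> W" and zW: "z \<in> W" and pyW: "p y \<in> W" using y z YW UW pW by auto
      have zy: "z \<noteq> y" using YP y z by auto
      have zpy: "z \<noteq> p y" using pnU y z by auto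
      have c1: "f z \<noteq> f x" using fxU z zx by auto
      have c2: "f z \<noteq> f y" using Uf[OF z yW] zy by metis
      have c3: "f x \<noteq> f y" using fyx y by metis
      have fpy: "f (p y) = f y" using pW y by auto
      define g where "g = f(y := f x, z := f y)"
      have "colouring W E k g"
      proof (rule recol_colouring[where M="{y,z}"])
        show "\<And>u v. u\<in>W \<Longrightarrow> v\<in>W \<Longrightarrow> {u,v}\<in>E \<Longrightarrow> f u \<noteq> f v" by (rule fp)
        show "\<And>w. w \<in> W \<Longrightarrow> g w < k" using fk xW yW unfolding g_def by auto
        show "\<And>w. w \<in> W \<Longrightarrow> w \<notin> {y,z} \<Longrightarrow> g w = f w" unfolding g_def by auto
        fix m w assume m: "m \<in> {y,z}" "m \<in> W" and w: "w \<in> W" "w \<noteq> m" and eq: "g w = g m"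
        show "{w, m} \<notin> E"
        proof (cases "m = y")
          case True
          hence "g w = f x" using eq zy unfolding g_def by auto
          hence "w = x"
            using w True c3 zy Uf[OF xU w(1)] unfolding g_def by (cases "w = z") auto
          thus ?thesis using True Ynx[OF y] by auto
        next
          case False
          hence mz: "m = z" using m by auto
          hence "g w = f y" using eq unfolding g_def by auto
          moreover have "w \<noteq> y" proof assume "w = y" thus False using \<open>g w = f y\<close> c3 zy unfolding g_def by auto qed
          ultimately have "f w = f y" using w mz unfolding g_def by auto
          hence "w = p y" using puniq[OF y w(1) \<open>w \<noteq> y\<close>] by auto
          thus ?thesis using ne mz by auto
        qed
      qed
      moreover have "\<forall>w\<in>W. g w \<noteq> f z"
      proof
        fix w assume w: "w \<in> W"
        show "g w \<noteq> f z"
        proof (cases "w = y \<or> w = z")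
          case True thus ?thesis using c1 c2 zy unfolding g_def by auto
        next
          case False thus ?thesis using Uf[OF z w] unfolding g_def by auto
        qed
      qed
      ultimately show False using nocol fk zW by blast
    qed
    define I0 where "I0 = {y\<in>Y. \<forall>y2\<in>Y. y2 \<noteq> y \<longrightarrow> {p y, p y2} \<in> E}"
    define I1 where "I1 = Y - I0"
    have I1U: "\<And>y z. y \<in> I1 \<Longrightarrow> z \<in> U \<Longrightarrow> z \<noteq> x \<Longrightarrow> {y, z} \<in> E"
    proof (rule ccontr)
      fix y z assume yI: "y \<in> I1" and z: "z \<in> U" and zx: "z \<noteq> x" and ne: "{y,z} \<notin> E"
      have y: "y \<in> Y" using yI unfolding I1_def by auto
      then obtain y2 where y2: "y2 \<in> Y" "y2 \<noteq> y" "{p y, p y2} \<notin> E" using yI unfolding I1_def I0_def by auto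
      have yW: "y \<in> W" and zW: "z \<in> W" and y2W: "y2 \<in> W" and py2W: "p y2 \<in> W" using y y2 z YW UW pW by auto
      have py2: "f (p y2) = f y2" "p y2 \<noteq> y2" using pW y2 by auto
      have d1: "y \<noteq> p y2" using pnY[OF y2(1)] y by auto
      have d2: "y2 \<noteq> p y2" using py2 by auto
      have zy: "z \<noteq> y" "z \<noteq> y2" "z \<noteq> p y2" using YP y y2 pnU[OF y2(1)] z by auto
      have cyy2: "f y \<noteq> f y2"
      proof
        assume "f y = f y2" hence "y2 = p y" using puniq[OF y y2W y2(2)] by auto
        thus False using pnY[OF y] y2 by auto
      qed
      have c1: "f z \<noteq> f x" using fxU z zx by auto
      have c2: "f z \<noteq> f y" using Uf[OF z yW] zy by metis
      have c2': "f z \<noteq> f y2" using Uf[OF z y2W] zy by metis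
      have c3: "f x \<noteq> f y" using fyx y by metis
      have c3': "f x \<noteq> f y2" using fyx y2 by metis
      define g where "g = f(y := f z, p y2 := f y, y2 := f x)"
      have gy: "g y = f z" and gpy2: "g (p y2) = f y" and gy2: "g y2 = f x"
        using d1 d2 y2(2) unfolding g_def by auto
      have gother: "\<And>w. w \<notin> {y, p y2, y2} \<Longrightarrow> g w = f w" unfolding g_def by auto
      have "colouring W E k g"
      proof (rule recol_colouring[where M="{y, p y2, y2}"])
        show "\<And>u v. u\<in>W \<Longrightarrow> v\<in>W \<Longrightarrow> {u,v}\<in>E \<Longrightarrow> f u \<noteq> f v" by (rule fp)
        show "\<And>w. w \<in> W \<Longrightarrow> g w < k"
        proof -
          fix w assume "w \<in> W" thus "g w < k" using fk[of w] fk[OF zW] fk[OF yW] fk[OF xW] gy gpy2 gy2 gother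
            by (cases "w \<in> {y, p y2, y2}") auto
        qed
        show "\<And>w. w \<in> W \<Longrightarrow> w \<notin> {y, p y2, y2} \<Longrightarrow> g w = f w" using gother by auto
        fix m w assume m: "m \<in> {y, p y2, y2}" "m \<in> W" and w: "w \<in> W" "w \<noteq> m" and eq: "g w = g m"
        show "{w, m} \<notin> E"
        proof -
          consider "m = y" | "m = p y2" | "m = y2" using m by auto
          thus ?thesis
          proof cases
            case 1
            hence "g w = f z" using eq gy by auto
            hence "w \<notin> {y, p y2, y2} \<or> w = y" using gpy2 gy2 c2 c1 by auto
            hence "w = z" using gother Uf[OF z w(1)] \<open>g w = f z\<close> w 1 by auto
            thus ?thesis using ne 1 by (simp add: insert_commute)
          next
            case 2
            hence "g w = f y" using eq gpy2 by auto
            hence "w \<notin> {y, p y2, y2} \<or> w = p y2" using gy gy2 c2 c3 by auto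
            hence "w \<notin> {y, p y2, y2}" using w 2 by auto
            hence "f w = f y" "w \<noteq> y" using gother \<open>g w = f y\<close> by auto
            hence "w = p y" using puniq[OF y w(1)] by auto
            thus ?thesis using y2(3) 2 by auto
          next
            case 3
            hence "g w = f x" using eq gy2 by auto
            hence "w \<notin> {y, p y2, y2} \<or> w = y2" using gy gpy2 c1 c3 by auto
            hence "w \<notin> {y, p y2, y2}" using w 3 by auto
            hence "w = x" using gother Uf[OF xU w(1)] \<open>g w = f x\<close> by auto
            thus ?thesis using Ynx[OF y2(1)] 3 by auto
          qed
        qed
      qed
      moreover have "\<forall>w\<in>W. g w \<noteq> f y2"
      proof
        fix w assume w: "w \<in> W"
        show "g w \<noteq> f y2"
        proof (cases "w \<in> {y, p y2, y2}")
          case True thus ?thesis using gy gpy2 gy2 c2' cyy2 c3' by auto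
        next
          case False
          hence "w \<noteq> y2" "w \<noteq> p y2" by auto
          thus ?thesis using gother[OF False] puniq[OF y2(1) w] by auto
        qed
      qed
      ultimately show False using nocol fk y2W by blast
    qed
    have finY: "finite Y" using fin YW finite_subset by blast
    have I0Y: "I0 \<subseteq> Y" unfolding I0_def by auto
    have cYI: "card Y = card I0 + card I1" unfolding I1_def using I0Y finY
      by (metis card_Diff_subset card_mono finite_subset le_add_diff_inverse)
    have xU1: "1 \<le> card U" using xU finP(2) by (metis One_nat_def Suc_leI card_gt_0_iff empty_iff)
    have cUY: "2 * card U + card Y \<le> 2 * clique_number W E"
    proof (cases "card Y + 2 \<le> 2 * card I1")
      case True
      define K where "K = (U - {x}) \<union> I1"
      have "clique W E K" unfolding clique_def
      proof (intro conjI ballI impI)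
        show "K \<subseteq> W" unfolding K_def I1_def using UW YW by auto
        fix a b assume a: "a \<in> K" and b: "b \<in> K" and ab: "a \<noteq> b"
        show "{a,b} \<in> E"
        proof (cases "a \<in> I1")
          case True
          show ?thesis
          proof (cases "b \<in> I1")
            case True thus ?thesis using Yclq \<open>a \<in> I1\<close> ab unfolding I1_def by auto
          next
            case False thus ?thesis using b I1U[OF \<open>a \<in> I1\<close>] unfolding K_def by auto
          qed
        next
          case False
          hence aU: "a \<in> U - {x}" using a unfolding K_def by auto
          show ?thesis
          proof (cases "b \<in> I1")
            case True thus ?thesis using I1U[OF True, of a] aU com[of a b] by auto
          next
            case False thus ?thesis using b aU Uclq ab unfolding K_def by auto
          qed
        qed
      qed
      hence "card K \<le> clique_number W E" by (rule om_ge[OF fin])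
      moreover have "card K = (card U - 1) + card I1"
      proof -
        have "(U - {x}) \<inter> I1 = {}" using YP unfolding I1_def by auto
        moreover have "finite I1" using finY unfolding I1_def by auto
        ultimately show ?thesis unfolding K_def using finP xU by (simp add: card_Un_disjoint)
      qed
      ultimately show ?thesis using True cYI xU1 by linarith
    next
      case False
      note F = False
      show ?thesis
      proof (cases "I1 = {}")
        case True
        define K where "K = U \<union> p ` Y"
        have "clique W E K" unfolding clique_def
        proof (intro conjI ballI impI)
          show "K \<subseteq> W" unfolding K_def using UW pW by auto
          fix a b assume a: "a \<in> K" and b: "b \<in> K" and ab: "a \<noteq> b"
          show "{a,b} \<in> E"
          proof (cases "a \<in> U")
            case aU: True
            show ?thesis
            proof (cases "b \<in> U")
              case True thus ?thesis using Uclq aU ab by auto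
            next
              case False then obtain y where "y \<in> Y" "b = p y" using b unfolding K_def by auto
              thus ?thesis using pU[of y a] aU com[of a b] by auto
            qed
          next
            case False then obtain y where y: "y \<in> Y" "a = p y" using a unfolding K_def by auto
            show ?thesis
            proof (cases "b \<in> U")
              case True thus ?thesis using pU[of y b] y by auto
            next
              case False then obtain y' where y': "y' \<in> Y" "b = p y'" using b unfolding K_def by auto
              hence "y' \<noteq> y" using y ab by auto
              moreover have "y \<in> I0" using y \<open>I1 = {}\<close> unfolding I1_def by auto
              ultimately show ?thesis using y y' unfolding I0_def by auto
            qed
          qed
        qed
        hence "card K \<le> clique_number W E" by (rule om_ge[OF fin])
        moreover have "card K = card U + card Y"
        proof -
          have "U \<inter> p ` Y = {}" using pnU by auto
          moreover have "card (p ` Y) = card Y" using pinj by (rule card_image)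
          ultimately show ?thesis unfolding K_def using finP finY by (simp add: card_Un_disjoint)
        qed
        ultimately show ?thesis by linarith
      next
        case False
        then obtain y1 where y1: "y1 \<in> I1" by blast
        define K where "K = U \<union> p ` (insert y1 I0)"
        have y1Y: "y1 \<in> Y" "y1 \<notin> I0" using y1 unfolding I1_def by auto
        have sub: "insert y1 I0 \<subseteq> Y" using y1Y I0Y by auto
        have "clique W E K" unfolding clique_def
        proof (intro conjI ballI impI)
          show "K \<subseteq> W" unfolding K_def using UW pW sub by auto
          fix a b assume a: "a \<in> K" and b: "b \<in> K" and ab: "a \<noteq> b"
          show "{a,b} \<in> E"
          proof (cases "a \<in> U")
            case aU: True
            show ?thesis
            proof (cases "b \<in> U")
              case True thus ?thesis using Uclq aU ab by auto
            next
              case False then obtain y where "y \<in> Y" "b = p y" using b sub unfolding K_def by auto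
              thus ?thesis using pU[of y a] aU com[of a b] by auto
            qed
          next
            case False then obtain y where y: "y \<in> insert y1 I0" "a = p y" using a unfolding K_def by auto
            show ?thesis
            proof (cases "b \<in> U")
              case True thus ?thesis using pU[of y b] y sub by auto
            next
              case False then obtain y' where y': "y' \<in> insert y1 I0" "b = p y'" using b unfolding K_def by auto
              hence yy: "y' \<noteq> y" using y ab by auto
              show ?thesis
              proof (cases "y \<in> I0")
                case True thus ?thesis using y y' yy sub unfolding I0_def by auto
              next
                case False
                hence "y' \<in> I0" using y y' yy by auto
                hence "{p y', p y} \<in> E" using y yy sub unfolding I0_def by auto
                thus ?thesis using y y' com by metis
              qed
            qed
          qed
        qed
        hence "card K \<le> clique_number W E" by (rule om_ge[OF fin])
        moreover have "card K = card U + (card I0 + 1)"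
        proof -
          have "U \<inter> p ` (insert y1 I0) = {}" using pnU sub by auto
          moreover have "card (p ` (insert y1 I0)) = card (insert y1 I0)"
            using inj_on_subset[OF pinj sub] by (rule card_image)
          moreover have "card (insert y1 I0) = card I0 + 1" using y1Y finY I0Y finite_subset by fastforce
          ultimately show ?thesis unfolding K_def using finP finY sub finite_subset
            by (metis card_Un_disjoint finite_imageI)
        qed
        ultimately show ?thesis using F cYI by linarith
      qed
    qed
    show ?thesis using key cY cUY k_def by linarith
  qed
qed

lemma com2: "{a,b} = {b,a}" by (rule insert_commute)

lemma main_ineq:
  assumes "finite W" "W \<noteq> {}" "S \<subseteq> W" "S \<noteq> {}"
  shows "4 * chromatic_number W E + card S \<le> 2 * clique_number W E + max_degree W E + 1 + card W + 3 * chromatic_number S E"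
  using assms
proof (induction "card W" arbitrary: W S rule: less_induct)
  case less
  have finW: "finite W" and finS: "finite S" using less.prems finite_subset by auto
  obtain f where f: "colouring S E (chromatic_number S E) f" using chi_col[OF finS] by blast
  obtain s0 where s0: "s0 \<in> S" using less.prems by blast
  define C where "C = {v\<in>S. f v = f s0}"
  have indC: "indep C" unfolding indep_def C_def using f unfolding colouring_def by (metis (mono_tags, lifting) mem_Collect_eq)
  have CW: "C \<subseteq> W" unfolding C_def using less.prems by auto
  obtain J where J: "C \<subseteq> J" "J \<subseteq> W" "indep J" "\<forall>v\<in>W - J. \<exists>j\<in>J. {v,j} \<in> E"
    using max_indep_ext[OF finW CW indC] by blast
  define W' where "W' = W - J"
  have s0J: "s0 \<in> J" using s0 J(1) unfolding C_def by auto
  have finJ: "finite J" using J(2) finW finite_subset by blast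
  have "W' \<subset> W" unfolding W'_def using s0J J(2) by auto
  hence lt: "card W' < card W" using finW by (rule psubset_card_mono[rotated])
  have finW': "finite W'" unfolding W'_def using finW by auto
  have chiW: "chromatic_number W E \<le> chromatic_number W' E + 1"
    unfolding W'_def by (rule chi_add_indep[OF finW J(3)])
  have omW': "clique_number W' E \<le> clique_number W E" unfolding W'_def using om_mono[OF finW] by auto
  have chiS1: "1 \<le> chromatic_number S E" using chi_pos[OF finS] less.prems by auto
  have omW1: "1 \<le> clique_number W E" using om_pos[OF finW] less.prems by auto
  have cJ: "card W = card W' + card J" unfolding W'_def using J(2) finJ
    by (metis card_Diff_subset card_mono finW le_add_diff_inverse2)
  have cSW: "card S \<le> card W" using less.prems finW card_mono by blast
  show ?case
  proof (cases "W' = {}")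
    case True
    hence "chromatic_number W E \<le> 1" using chiW chi_empty by simp
    thus ?thesis using cSW omW1 chiS1 by linarith
  next
    case W'ne: False
    have mdW: "max_degree W' E + 1 \<le> max_degree W E" unfolding W'_def
      by (rule peel[OF finW J(2) J(4)]) (use W'ne W'_def in auto)
    show ?thesis
    proof (cases "S - J = {}")
      case False
      have sub1: "S - J \<subseteq> S - C" using J(1) by blast
      have "chromatic_number (S - J) E \<le> chromatic_number (S - C) E"
        using chi_mono[OF _ sub1] finS by blast
      also have "\<dots> \<le> chromatic_number S E - 1" unfolding C_def by (rule chi_remove_class[OF f s0])
      finally have chiSJ: "chromatic_number (S - J) E \<le> chromatic_number S E - 1" .
      have IH: "4 * chromatic_number W' E + card (S - J) \<le> 2 * clique_number W' E + max_degree W' E + 1 + card W' + 3 * chromatic_number (S - J) E"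
      proof -
        have "S - J \<subseteq> W'" unfolding W'_def using less.prems(3) by blast
        thus ?thesis using less.hyps[OF lt finW' W'ne _ False] by blast
      qed
      have cS: "card S = card (S - J) + card (S \<inter> J)" using card_Int_Diff[OF finS, of J] by linarith
      have "card (S \<inter> J) \<le> card J" using finJ by (simp add: card_mono)
      thus ?thesis using IH cS cJ chiSJ chiS1 chiW omW' mdW by linarith
    next
      case True
      hence cSJ: "card S \<le> card J" using finJ card_mono by (metis Diff_eq_empty_iff)
      show ?thesis
      proof (cases "\<exists>T. T \<subseteq> W' \<and> card T = 3 \<and> indep T")
        case True
        then obtain T where T: "T \<subseteq> W'" "card T = 3" "indep T" by blast
        have "T \<noteq> {}" using T by auto
        hence IH: "4 * chromatic_number W' E + card T \<le> 2 * clique_number W' E + max_degree W' E + 1 + card W' + 3 * chromatic_number T E"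
          using less.hyps[OF lt finW' W'ne T(1)] by auto
        have "chromatic_number T E \<le> 1" by (rule chi_indep[OF T(3)])
        thus ?thesis using IH T(2) cJ cSJ chiS1 chiW omW' mdW by linarith
      next
        case False
        have no3: "\<And>a b c. a\<in>W' \<Longrightarrow> b\<in>W' \<Longrightarrow> c\<in>W' \<Longrightarrow> a\<noteq>b \<Longrightarrow> a\<noteq>c \<Longrightarrow> b\<noteq>c
           \<Longrightarrow> {a,b}\<notin>E \<Longrightarrow> {a,c}\<notin>E \<Longrightarrow> {b,c}\<notin>E \<Longrightarrow> False"
        proof -
          fix a b c assume *: "a\<in>W'" "b\<in>W'" "c\<in>W'" "a\<noteq>b" "a\<noteq>c" "b\<noteq>c" "{a,b}\<notin>E" "{a,c}\<notin>E" "{b,c}\<notin>E"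
          have "indep {a,b,c}" unfolding indep_def
          proof (intro ballI)
            fix u v assume "u \<in> {a,b,c}" "v \<in> {a,b,c}"
            thus "{u,v} \<notin> E" using * loopfree[of u] com2[of a b] com2[of a c] com2[of b c] by auto
          qed
          moreover have "card {a,b,c} = 3" using * by auto
          ultimately show False using False * by auto
        qed
        have "4 * chromatic_number W' E \<le> 2 * clique_number W' E + max_degree W' E + 1 + card W'"
          by (rule lemB[OF finW' W'ne no3]) blast+
        thus ?thesis using cJ cSJ chiS1 chiW omW' mdW by linarith
      qed
    qed
  qed
qed
end

theorem proposition3:
  fixes V S :: "'a set" and E :: "'a set set"
  assumes "graph V E" and "S \<subseteq> V" and "S \<noteq> {}"
  shows "real (chromatic_number V E) \<le>
     (1/2) * (real (clique_number V E) + (real (max_degree V E) + 1 + real (card V)) / 2)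
     + (3 * real (chromatic_number S (induced_edges E S)) - real (card S)) / 4"
proof -
  have fin: "finite V" and ne: "V \<noteq> {}" using assms(1) unfolding graph_def by auto
  have lf: "\<And>u. {u} \<notin> E"
  proof
    fix u assume "{u} \<in> E"
    then obtain a b where "{u} = {a,b}" "a \<noteq> b" using assms(1) unfolding graph_def by blast
    thus False by (metis doubleton_eq_iff insert_absorb2)
  qed
  interpret gr E by unfold_locales (rule lf)
  have col: "\<And>k f. colouring S (induced_edges E S) k f = colouring S E k f"
    unfolding colouring_def induced_edges_def by auto
  have eqc: "chromatic_number S (induced_edges E S) = chromatic_number S E"
    unfolding chromatic_number_def col ..
  have "4 * chromatic_number V E + card S \<le> 2 * clique_number V E + max_degree V E + 1 + card V + 3 * chromatic_number S E"
    by (rule main_ineq[OF fin ne assms(2,3)])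
  hence "real (4 * chromatic_number V E + card S) \<le> real (2 * clique_number V E + max_degree V E + 1 + card V + 3 * chromatic_number S E)"
    by (simp only: of_nat_le_iff)
  hence "4 * real (chromatic_number V E) + real (card S) \<le> 2 * real (clique_number V E) + real (max_degree V E) + 1 + real (card V) + 3 * real (chromatic_number S E)"
    by simp
  thus ?thesis unfolding eqc by (simp add: field_simps)
qed

end
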